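(* Let $n$ be a positive integer and $\alpha,\beta\in\mathbb{R}$. If $\lambda$ is an eigenvalue of $A_n^{\alpha,\beta}$, then \[ |\lambda|\ \le\ T_n\cdot\max\{1,n^{2\beta}\}\cdot\max_{1\le i\le n}|J_{\alpha-\beta}(i)| . \]
   Context: For $i,j$ positive integers, $(i,j)$ denotes the greatest common divisor and $[i,j]$ the least common multiple. For $\alpha,\beta\in\mathbb{R}$ and a positive integer $n$, $A_n^{\alpha,\beta}$ is the $n\times n$ real matrix with $(i,j)$ entry $(i,j)^{\alpha}[i,j]^{\beta}$. $E_n$ is the $n\times n$ matrix with $(E_n)_{ij}=1$ if $j\mid i$ and $(E_n)_{ij}=0$ otherwise; $T_n$ denotes the largest eigenvalue of the symmetric matrix $E_n^{T}E_n$. For real $s$, $J_s$ is the arithmetical function $J_s(k)=k^{s}\prod_{p\mid k}\left(1-p^{-s}\right)$ (product over primes $p$ dividing $k$), equivalently $J_s(k)=\sum_{d\mid k} d^{s}\mu(k/d)$ where $\mu$ is the Möbius function. *)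

theory Defs
  imports "HOL-Computational_Algebra.Primes" "Jordan_Normal_Form.Matrix" "Jordan_Normal_Form.Char_Poly"
begin

(* Matrices are n x n, 0-based: row/column index i corresponds to the integer i+1. *)

definition A_mat :: "real \<Rightarrow> real \<Rightarrow> nat \<Rightarrow> real mat" where
  "A_mat \<alpha> \<beta> n = mat n n (\<lambda>(i,j).
     (real (gcd (i+1) (j+1))) powr \<alpha> * (real (lcm (i+1) (j+1))) powr \<beta>)"

definition E_mat :: "nat \<Rightarrow> real mat" where
  "E_mat n = mat n n (\<lambda>(i,j). if (j+1) dvd (i+1) then 1 else 0)"

definition T_n :: "nat \<Rightarrow> real" where
  "T_n n = Max {k. eigenvalue (transpose_mat (E_mat n) * E_mat n) k}"

definition J_fun :: "real \<Rightarrow> nat \<Rightarrow> real" where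
  "J_fun s k = real k powr s * (\<Prod>p\<in>prime_factors k. (1 - real p powr (- s)))"

end

theory Submission
  imports Defs "HOL-Analysis.Function_Topology" "HOL-Analysis.Convex" "Jordan_Normal_Form.Spectral_Radius"
begin


lemma J_one[simp]: "J_fun s (Suc 0) = 1" by (simp add: J_fun_def)

lemma J_prime_pow:
  assumes p: "prime p" shows "J_fun s (p ^ Suc i) = real p powr (real (Suc i) * s) - real p powr (real i * s)"
proof -
  have pf: "prime_factors (p ^ Suc i) = {p}"
    using prime_factorization_prime_power[OF p, of "Suc i"] by (simp del: power_Suc)
  have pos: "real p > 0" using p prime_gt_0_nat by simp
  have e: "real (p ^ Suc i) powr s = real p powr (real (Suc i) * s)"
  proof -
    have "real (p ^ Suc i) = real p powr real (Suc i)" using powr_realpow[OF pos, of "Suc i"] by (simp only: of_nat_power)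
    then show ?thesis by (simp add: powr_powr del: of_nat_Suc)
  qed
  have "J_fun s (p ^ Suc i) = real p powr (real (Suc i) * s) * (1 - real p powr (-s))"
    unfolding J_fun_def pf e by simp
  also have "\<dots> = real p powr (real (Suc i) * s) - real p powr (real i * s)"
    using pos by (simp add: algebra_simps powr_add[symmetric] del: of_nat_Suc) (simp add: algebra_simps)
  finally show ?thesis .
qed

lemma J_prime_pow_sum:
  assumes p: "prime p" shows "(\<Sum>i\<le>k. J_fun s (p ^ i)) = real p powr (real k * s)"
proof (induction k)
  case 0 then show ?case using prime_gt_0_nat[OF p] by simp
next
  case (Suc k) then show ?case using J_prime_pow[OF p, of s k] prime_gt_0_nat[OF p] by (simp del: power_Suc)
qed

lemma J_mult:
  assumes "coprime a b" "a > 0" "b > 0"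
  shows "J_fun s (a * b) = J_fun s a * J_fun s b"
proof -
  have pf: "prime_factors (a*b) = prime_factors a \<union> prime_factors b"
    using assms by (simp add: prime_factors_product)
  have dj: "prime_factors a \<inter> prime_factors b = {}"
  proof (rule ccontr)
    assume "prime_factors a \<inter> prime_factors b \<noteq> {}"
    then obtain p where "p \<in> prime_factors a" "p \<in> prime_factors b" by blast
    then have "prime p" "p dvd a" "p dvd b" by auto
    with assms(1) coprime_common_divisor_nat[of a b p] show False by auto
  qed
  show ?thesis unfolding J_fun_def pf
    by (subst prod.union_disjoint[OF _ _ dj]) (auto simp: powr_mult)
qed

lemma divisors_mult_sum:
  fixes f :: "nat \<Rightarrow> real"
  assumes cop: "coprime a b" and a: "a > 0" and b: "b > 0"
  shows "(\<Sum>d\<in>{d. d dvd a * b}. f d) = (\<Sum>x\<in>{x. x dvd a}. \<Sum>y\<in>{y. y dvd b}. f (x * y))"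
proof -
  have inj: "inj_on (\<lambda>(x,y). x * y) ({x. x dvd a} \<times> {y. y dvd b})"
  proof (rule inj_onI, clarify)
    fix x y x' y' assume h: "x dvd a" "y dvd b" "x' dvd a" "y' dvd b" "x * y = x' * y'"
    have c1: "coprime a y" using coprime_divisors[OF dvd_refl h(2) cop] .
    have c2: "coprime a y'" using coprime_divisors[OF dvd_refl h(4) cop] .
    have "gcd (x*y) a = x" using gcd_mult_left_right_cancel[OF c1, of x] gcd_nat.absorb1[OF h(1)] by simp
    moreover have "gcd (x'*y') a = x'" using gcd_mult_left_right_cancel[OF c2, of x'] gcd_nat.absorb1[OF h(3)] by simp
    ultimately have "x = x'" using h(5) by simp
    moreover have "x > 0" using h(1) a by (metis dvd_pos_nat)
    ultimately show "x = x' \<and> y = y'" using h(5) by simp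
  qed
  have img: "(\<lambda>(x,y). x * y) ` ({x. x dvd a} \<times> {y. y dvd b}) = {d. d dvd a * b}"
  proof
    show "(\<lambda>(x,y). x * y) ` ({x. x dvd a} \<times> {y. y dvd b}) \<subseteq> {d. d dvd a * b}"
      by (auto intro: mult_dvd_mono)
    show "{d. d dvd a * b} \<subseteq> (\<lambda>(x,y). x * y) ` ({x. x dvd a} \<times> {y. y dvd b})"
    proof
      fix d assume "d \<in> {d. d dvd a * b}"
      then have "d dvd a * b" by simp
      then obtain x y where "d = x * y" "x dvd a" "y dvd b" using division_decomp[of d a b] by blast
      then show "d \<in> (\<lambda>(x,y). x * y) ` ({x. x dvd a} \<times> {y. y dvd b})" by auto
    qed
  qed
  have fa: "finite {x. x dvd a}" using a by simp
  have fb: "finite {y. y dvd b}" using b by simp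
  have "(\<Sum>d\<in>{d. d dvd a * b}. f d) = (\<Sum>p\<in>{x. x dvd a} \<times> {y. y dvd b}. f (fst p * snd p))"
    unfolding img[symmetric] by (subst sum.reindex[OF inj]) (simp add: case_prod_beta)
  also have "\<dots> = (\<Sum>x\<in>{x. x dvd a}. \<Sum>y\<in>{y. y dvd b}. f (x * y))"
    by (subst sum.cartesian_product) (simp add: case_prod_beta)
  finally show ?thesis .
qed

lemma J_divisor_sum:
  assumes "m > 0" shows "(\<Sum>d\<in>{d. d dvd m}. J_fun s d) = real m powr s"
  using assms
proof (induction m rule: less_induct)
  case (less m)
  show ?case
  proof (cases "m = 1")
    case True
    then show ?thesis by simp
  next
    case False
    with less.prems have "m > 1" by simp
    then obtain p where p: "prime p" "p dvd m" using prime_factor_nat[of m] by auto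
    have m0: "m \<noteq> 0" using less.prems by simp
    have pu: "\<not> is_unit p" using prime_gt_1_nat[OF p(1)] by simp
    obtain r where r0: "m = p ^ multiplicity p m * r" "\<not> p dvd r"
      by (rule multiplicity_decompose'[OF m0 pu])
    define k where "k = multiplicity p m"
    have r: "m = p ^ k * r" "\<not> p dvd r" using r0 unfolding k_def by auto
    have k: "k > 0" unfolding k_def using prime_multiplicity_gt_zero_iff[of p m] p m0 by simp
    have rpos: "r > 0" using r less.prems by (metis gr0I mult_0_right)
    have p1: "p > 1" using p prime_gt_1_nat by blast
    have "p ^ k > 1" using one_less_power[OF p1 k] .
    then have rlt: "r < m" using r(1) rpos by simp
    have cop: "coprime (p ^ k) r" using r(2) p by (simp add: prime_imp_coprime coprime_commute)
    have ppos: "p ^ k > 0" using p1 by simp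
    have "(\<Sum>d\<in>{d. d dvd m}. J_fun s d) = (\<Sum>x\<in>{x. x dvd p ^ k}. \<Sum>y\<in>{y. y dvd r}. J_fun s (x * y))"
      unfolding r(1) by (rule divisors_mult_sum[OF cop ppos rpos])
    also have "\<dots> = (\<Sum>x\<in>{x. x dvd p ^ k}. \<Sum>y\<in>{y. y dvd r}. J_fun s x * J_fun s y)"
    proof (intro sum.cong refl)
      fix x y assume "x \<in> {x. x dvd p ^ k}" "y \<in> {y. y dvd r}"
      then have "x dvd p ^ k" "y dvd r" by auto
      moreover have "coprime x y" using coprime_divisors[OF calculation cop] .
      moreover have "x > 0" "y > 0" using calculation(1,2) ppos rpos dvd_pos_nat by blast+
      ultimately show "J_fun s (x * y) = J_fun s x * J_fun s y" by (simp add: J_mult)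
    qed
    also have "\<dots> = (\<Sum>x\<in>{x. x dvd p ^ k}. J_fun s x) * (\<Sum>y\<in>{y. y dvd r}. J_fun s y)"
      by (simp add: sum_product)
    also have "(\<Sum>y\<in>{y. y dvd r}. J_fun s y) = real r powr s" using less.IH[OF rlt rpos] .
    also have "{x. x dvd p ^ k} = (\<lambda>i. p ^ i) ` {..k}"
      using divides_primepow_nat[OF p(1)] by auto
    also have "(\<Sum>x\<in>(\<lambda>i. p ^ i) ` {..k}. J_fun s x) = (\<Sum>i\<le>k. J_fun s (p ^ i))"
      using sum.reindex[of "\<lambda>i. p ^ i" "{..k}" "J_fun s"] p1 by (simp add: inj_on_def o_def)
    also have "\<dots> = real p powr (real k * s)" by (rule J_prime_pow_sum[OF p(1)])
    also have "real p powr (real k * s) * real r powr s = real m powr s"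
    proof -
      have "real (p ^ k) powr s = (real p powr real k) powr s" using p1 powr_realpow[of "real p" k] by simp
      also have "\<dots> = real p powr (real k * s)" by (simp add: powr_powr)
      finally have "real p powr (real k * s) = real (p ^ k) powr s" by simp
      then show ?thesis using p1 rpos by (simp add: r(1) powr_mult)
    qed
    finally show ?thesis .
  qed
qed



lemma quad_le0_imp:
  fixes a b :: real
  assumes h: "\<And>t. a * t + b * t^2 \<le> 0"
  shows "a = 0"
proof (rule ccontr)
  assume a0: "a \<noteq> 0"
  define c where "c = \<bar>b\<bar> + 1"
  have c0: "c > 0" unfolding c_def by simp
  have cb: "c + b > 0" unfolding c_def by (cases "b \<ge> 0") auto
  have "a * (a / c) + b * (a / c)^2 = a^2 * (c + b) / c^2"
    using c0 by (simp add: field_simps power2_eq_square)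
  moreover have "a^2 * (c + b) / c^2 > 0" using a0 cb c0 by simp
  ultimately show False using h[of "a / c"] by simp
qed

definition ee :: "nat \<Rightarrow> nat \<Rightarrow> real" where
  "ee k i = (if Suc i dvd Suc k then 1 else 0)"

definition qf :: "nat \<Rightarrow> (nat \<Rightarrow> real) \<Rightarrow> real" where
  "qf n y = (\<Sum>k<n. (\<Sum>i<n. ee k i * y i)^2)"

definition nf :: "nat \<Rightarrow> (nat \<Rightarrow> real) \<Rightarrow> real" where
  "nf n y = (\<Sum>i<n. (y i)^2)"

lemma qf_nonneg: "qf n y \<ge> 0" unfolding qf_def by (intro sum_nonneg) simp

lemma maximizer_exists:
  assumes n: "n \<ge> 1"
  shows "\<exists>x. nf n x = 1 \<and> (\<forall>z. qf n z \<le> qf n x * nf n z)"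
proof -
  define S' where "S' = (\<lambda>i::nat. if i < n then {-1..1::real} else {0})"
  define K where "K = PiE UNIV S' \<inter> {y. nf n y = 1}"
  have cS: "\<forall>i. compact (S' i)" unfolding S'_def by auto
  have c1: "compact (PiE UNIV S')"
    using compactin_PiE[of "\<lambda>i. euclidean" UNIV S'] cS by (simp add: euclidean_product_topology)
  have contN: "continuous_on UNIV (nf n)" unfolding nf_def
    by (intro continuous_intros continuous_on_product_coordinates)
  have contQ: "continuous_on UNIV (qf n)" unfolding qf_def
    by (intro continuous_intros continuous_on_product_coordinates)
  have c2: "closed {y. nf n y = 1}"
    by (rule closed_Collect_eq[OF contN]) simp
  have cK: "compact K" unfolding K_def using c1 c2 by blast
  define x0 where "x0 = (\<lambda>i::nat. if i = 0 then 1 else 0::real)"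
  have "nf n x0 = (\<Sum>i<n. if i = 0 then 1 else 0)" unfolding nf_def
    by (rule sum.cong) (auto simp: x0_def)
  also have "\<dots> = 1" using n by (simp add: sum.delta)
  finally have "nf n x0 = 1" .
  moreover have "x0 \<in> PiE UNIV S'" unfolding x0_def S'_def using n by auto
  ultimately have "x0 \<in> K" unfolding K_def by simp
  then have Kne: "K \<noteq> {}" by blast
  obtain x where xK: "x \<in> K" and xmax: "\<And>y. y \<in> K \<Longrightarrow> qf n y \<le> qf n x"
    using continuous_attains_sup[OF cK Kne continuous_on_subset[OF contQ]] by blast
  have Nx: "nf n x = 1" using xK unfolding K_def by simp
  have "qf n z \<le> qf n x * nf n z" for z
  proof (cases "nf n z = 0")
    case True
    then have "\<forall>i\<in>{..<n}. (z i)^2 = 0" unfolding nf_def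
      by (subst sum_nonneg_eq_0_iff[symmetric]) auto
    then have "qf n z = 0" unfolding qf_def by simp
    then show ?thesis using True by simp
  next
    case False
    have Np: "nf n z > 0" using False unfolding nf_def
      by (metis (no_types, lifting) less_eq_real_def sum_nonneg zero_le_power2)
    define r where "r = sqrt (nf n z)"
    have r0: "r > 0" unfolding r_def using Np by simp
    have r2: "r^2 = nf n z" unfolding r_def using Np by simp
    define z' where "z' = (\<lambda>i. if i < n then z i / r else 0)"
    have "\<bar>z i\<bar> \<le> r" if "i < n" for i
    proof -
      have "(z i)^2 \<le> nf n z" unfolding nf_def
        using that by (intro member_le_sum) auto
      then have "sqrt ((z i)^2) \<le> r" unfolding r_def by (rule real_sqrt_le_mono)
      then show ?thesis by simp
    qed
    then have "z' \<in> PiE UNIV S'" unfolding z'_def S'_def using r0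
      by (auto simp: divide_le_eq le_divide_eq abs_le_iff) (smt (verit))
    moreover have "nf n z' = nf n z / r^2" unfolding nf_def z'_def
      by (simp add: power_divide sum_divide_distrib)
    ultimately have "z' \<in> K" unfolding K_def using r2 Np by simp
    then have "qf n z' \<le> qf n x" by (rule xmax)
    moreover have "qf n z' = qf n z / r^2"
    proof -
      have h: "(\<Sum>i<n. ee k i * z' i) = (\<Sum>i<n. ee k i * z i) / r" for k
        unfolding z'_def by (simp add: sum_divide_distrib)
      show ?thesis unfolding qf_def h power_divide by (rule sum_divide_distrib[symmetric])
    qed
    ultimately have "qf n z / r^2 \<le> qf n x" by simp
    then show ?thesis using r2 Np by (simp add: divide_le_eq mult.commute)
  qed
  then show ?thesis using Nx by blast
qed

lemma E_mat_ee: "i < n \<Longrightarrow> j < n \<Longrightarrow> E_mat n $$ (i, j) = ee i j"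
  unfolding E_mat_def ee_def by simp

lemma rayleigh_T:
  assumes n: "n \<ge> 1"
  shows "qf n z \<le> T_n n * nf n z \<and> T_n n \<ge> 0"
proof -
  obtain x where Nx: "nf n x = 1" and xmax: "\<And>z. qf n z \<le> qf n x * nf n z"
    using maximizer_exists[OF n] by blast
  define \<mu> where "\<mu> = qf n x"
  define v where "v = (\<lambda>k. \<Sum>i<n. ee k i * x i)"
  define g where "g = (\<lambda>j. (\<Sum>k<n. ee k j * v k) - \<mu> * x j)"
  define h where "h = (\<lambda>k. \<Sum>i<n. ee k i * g i)"
  define G where "G = (\<Sum>j<n. g j * g j)"
  define P where "P = (\<Sum>j<n. x j * g j)"
  have e2: "(\<Sum>k<n. v k * h k) = G + \<mu> * P"
  proof -
    have "(\<Sum>k<n. v k * h k) = (\<Sum>k<n. \<Sum>j<n. g j * (ee k j * v k))"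
      unfolding h_def by (simp add: sum_distrib_left mult_ac)
    also have "\<dots> = (\<Sum>j<n. \<Sum>k<n. g j * (ee k j * v k))" by (rule sum.swap)
    also have "\<dots> = (\<Sum>j<n. g j * (g j + \<mu> * x j))"
      by (simp add: sum_distrib_left[symmetric] g_def)
    also have "\<dots> = G + \<mu> * P" unfolding G_def P_def
      by (simp add: algebra_simps sum.distrib sum_distrib_left)
    finally show ?thesis .
  qed
  have ineq: "(2 * G) * t + (qf n g - \<mu> * nf n g) * t^2 \<le> 0" for t
  proof -
    have a: "(\<Sum>i<n. ee k i * (x i + t * g i)) = v k + t * h k" for k
      unfolding v_def h_def by (simp add: algebra_simps sum.distrib sum_distrib_left)
    have e1: "qf n (\<lambda>i. x i + t * g i) = qf n x + 2 * t * (\<Sum>k<n. v k * h k) + t^2 * qf n g"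
    proof -
      have "qf n (\<lambda>i. x i + t * g i) = (\<Sum>k<n. (v k)^2) + 2 * t * (\<Sum>k<n. v k * h k) + t^2 * (\<Sum>k<n. (h k)^2)"
        unfolding qf_def a by (simp add: power2_sum algebra_simps sum.distrib sum_distrib_left)
      moreover have "qf n x = (\<Sum>k<n. (v k)^2)" unfolding qf_def v_def ..
      moreover have "qf n g = (\<Sum>k<n. (h k)^2)" unfolding qf_def h_def ..
      ultimately show ?thesis by simp
    qed
    have e3: "nf n (\<lambda>i. x i + t * g i) = 1 + 2 * t * P + t^2 * nf n g"
      unfolding Nx[symmetric] nf_def P_def
      by (simp add: power2_sum algebra_simps sum.distrib sum_distrib_left)
    have "qf n (\<lambda>i. x i + t * g i) \<le> \<mu> * nf n (\<lambda>i. x i + t * g i)"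
      using xmax unfolding \<mu>_def .
    then show ?thesis unfolding e1 e3 e2 \<mu>_def[symmetric] by (simp add: algebra_simps)
  qed
  have "2 * G = 0" by (rule quad_le0_imp[OF ineq])
  then have "\<forall>j\<in>{..<n}. g j * g j = 0" unfolding G_def
    by (subst sum_nonneg_eq_0_iff[symmetric]) auto
  then have g0: "\<And>j. j < n \<Longrightarrow> g j = 0" by simp
  define M where "M = transpose_mat (E_mat n) * E_mat n"
  have Mc: "M \<in> carrier_mat n n" unfolding M_def E_mat_def carrier_mat_def by simp
  have ev: "eigenvalue M \<mu>"
    unfolding eigenvalue_def eigenvector_def
  proof (intro exI[of _ "vec n x"] conjI)
    show "vec n x \<in> carrier_vec (dim_row M)" using Mc by simp
    show "vec n x \<noteq> 0\<^sub>v (dim_row M)"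
    proof
      assume "vec n x = 0\<^sub>v (dim_row M)"
      then have "\<And>i. i < n \<Longrightarrow> x i = 0" using Mc by (metis carrier_matD(1) index_vec index_zero_vec(1))
      then have "nf n x = 0" unfolding nf_def by simp
      then show False using Nx by simp
    qed
    show "M *\<^sub>v vec n x = \<mu> \<cdot>\<^sub>v vec n x"
    proof (rule eq_vecI)
      show "dim_vec (M *\<^sub>v vec n x) = dim_vec (\<mu> \<cdot>\<^sub>v vec n x)" using Mc by simp
      fix j assume "j < dim_vec (\<mu> \<cdot>\<^sub>v vec n x)"
      then have j: "j < n" by simp
      have Mji: "M $$ (j, i) = (\<Sum>k<n. ee k j * ee k i)" if "i < n" for i
      proof -
        have Ed: "dim_row (E_mat n) = n" "dim_col (E_mat n) = n" by (simp_all add: E_mat_def)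
        have "M $$ (j, i) = col (E_mat n) j \<bullet> col (E_mat n) i"
          unfolding M_def using j that Ed by (simp add: index_mult_mat)
        also have "\<dots> = (\<Sum>k\<in>{0..<n}. E_mat n $$ (k, j) * E_mat n $$ (k, i))"
          using j that Ed by (simp add: scalar_prod_def)
        also have "\<dots> = (\<Sum>k<n. ee k j * ee k i)" unfolding lessThan_atLeast0
          by (rule sum.cong) (use j that in \<open>auto simp: E_mat_ee\<close>)
        finally show ?thesis .
      qed
      have "(M *\<^sub>v vec n x) $ j = (\<Sum>i<n. M $$ (j, i) * x i)"
        using Mc j by (simp add: scalar_prod_def lessThan_atLeast0)
      also have "\<dots> = (\<Sum>i<n. \<Sum>k<n. ee k j * ee k i * x i)"
        by (rule sum.cong) (simp_all add: Mji sum_distrib_right)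
      also have "\<dots> = (\<Sum>k<n. \<Sum>i<n. ee k j * ee k i * x i)" by (rule sum.swap)
      also have "\<dots> = (\<Sum>k<n. ee k j * v k)" unfolding v_def
        by (simp add: sum_distrib_left mult.assoc)
      also have "\<dots> = \<mu> * x j" using g0[OF j] unfolding g_def by simp
      finally show "(M *\<^sub>v vec n x) $ j = (\<mu> \<cdot>\<^sub>v vec n x) $ j" using j by simp
    qed
  qed
  have fin: "finite {k. eigenvalue M k}"
    using card_finite_spectrum(1)[OF Mc] unfolding spectrum_def .
  have "\<mu> \<le> T_n n" unfolding T_n_def M_def[symmetric]
    using ev fin by (intro Max_ge) auto
  moreover have "\<mu> \<ge> 0" unfolding \<mu>_def by (rule qf_nonneg)
  moreover have "nf n z \<ge> 0" unfolding nf_def by (intro sum_nonneg) simp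
  ultimately show ?thesis using xmax[of z] unfolding \<mu>_def[symmetric]
    by (meson mult_right_mono order_trans)
qed



lemma complex_rayleigh:
  fixes u :: "nat \<Rightarrow> complex"
  assumes n: "n \<ge> 1"
  shows "(\<Sum>d<n. (cmod (\<Sum>j<n. of_real (ee j d) * u j))^2) \<le> T_n n * (\<Sum>j<n. (cmod (u j))^2)"
proof -
  define w where "w = (\<lambda>d. \<Sum>j<n. of_real (ee j d) * u j)"
  define z where "z = (\<lambda>i. \<Sum>d<n. of_real (ee i d) * w d)"
  define W where "W = (\<Sum>d<n. (cmod (w d))^2)"
  define U where "U = (\<Sum>j<n. (cmod (u j))^2)"
  define Z where "Z = (\<Sum>i<n. (cmod (z i))^2)"
  have T0: "T_n n \<ge> 0" using rayleigh_T[OF n] by blast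
  have W0: "W \<ge> 0" unfolding W_def by (intro sum_nonneg) simp
  have U0: "U \<ge> 0" unfolding U_def by (intro sum_nonneg) simp
  have ZW: "Z \<le> T_n n * W"
  proof -
    have "Z = qf n (\<lambda>d. Re (w d)) + qf n (\<lambda>d. Im (w d))"
      unfolding Z_def qf_def z_def by (simp add: cmod_power2 sum.distrib)
    also have "\<dots> \<le> T_n n * nf n (\<lambda>d. Re (w d)) + T_n n * nf n (\<lambda>d. Im (w d))"
      using rayleigh_T[OF n] by (meson add_mono)
    also have "\<dots> = T_n n * W" unfolding W_def nf_def
      by (simp add: cmod_power2 sum.distrib distrib_left)
    finally show ?thesis .
  qed
  have key: "of_real W = (\<Sum>j<n. u j * cnj (z j))"
  proof -
    have "of_real W = (\<Sum>d<n. cnj (w d) * w d)" unfolding W_def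
      by (simp only: of_real_sum complex_norm_square mult.commute)
    also have "\<dots> = (\<Sum>d<n. \<Sum>j<n. u j * (of_real (ee j d) * cnj (w d)))"
    proof -
      define cw where "cw = (\<lambda>d. cnj (w d))"
      have "(\<Sum>d<n. cw d * w d) = (\<Sum>d<n. \<Sum>j<n. u j * (of_real (ee j d) * cw d))"
        unfolding w_def by (simp add: sum_distrib_left mult_ac)
      then show ?thesis unfolding cw_def .
    qed
    also have "\<dots> = (\<Sum>j<n. \<Sum>d<n. u j * (of_real (ee j d) * cnj (w d)))" by (rule sum.swap)
    also have "\<dots> = (\<Sum>j<n. u j * cnj (z j))" unfolding z_def
      by (simp add: sum_distrib_left)
    finally show ?thesis .
  qed
  have "W \<le> (\<Sum>j<n. cmod (u j) * cmod (z j))"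
  proof -
    have "W = Re (\<Sum>j<n. u j * cnj (z j))" using arg_cong[OF key, of Re] by simp
    also have "\<dots> \<le> cmod (\<Sum>j<n. u j * cnj (z j))" by (rule complex_Re_le_cmod)
    also have "\<dots> \<le> (\<Sum>j<n. cmod (u j * cnj (z j)))" by (rule norm_sum)
    also have "\<dots> = (\<Sum>j<n. cmod (u j) * cmod (z j))" by (simp add: norm_mult)
    finally show ?thesis .
  qed
  then have "W^2 \<le> (\<Sum>j<n. cmod (u j) * cmod (z j))^2" using W0 by (simp add: power_mono)
  also have "\<dots> \<le> U * Z" unfolding U_def Z_def by (rule Cauchy_Schwarz_ineq_sum)
  also have "\<dots> \<le> U * (T_n n * W)" using ZW U0 by (simp add: mult_left_mono)
  finally have W2: "W * W \<le> (U * T_n n) * W" by (simp add: power2_eq_square mult_ac)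
  have "W \<le> T_n n * U"
  proof (cases "W = 0")
    case True then show ?thesis using T0 U0 by simp
  next
    case False
    then have "W > 0" using W0 by simp
    then show ?thesis using W2 by (simp add: mult.commute)
  qed
  then show ?thesis unfolding W_def U_def w_def .
qed



lemma gcd_powr_sum:
  assumes i: "i < n" and j: "j < n"
  shows "real (gcd (Suc i) (Suc j)) powr s = (\<Sum>d<n. ee i d * ee j d * J_fun s (Suc d))"
proof -
  define g where "g = gcd (Suc i) (Suc j)"
  have g0: "g > 0" unfolding g_def by simp
  have gn: "g \<le> n" 
  proof -
    have "g \<le> Suc i" unfolding g_def by (rule dvd_imp_le[OF gcd_dvd1]) simp
    then show ?thesis using i by simp
  qed
  have img: "{d. d dvd g} = Suc ` {d \<in> {..<n}. Suc d dvd g}"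
  proof
    show "{d. d dvd g} \<subseteq> Suc ` {d \<in> {..<n}. Suc d dvd g}"
    proof
      fix d assume "d \<in> {d. d dvd g}"
      then have dg: "d dvd g" by simp
      then have "d > 0" using g0 by (cases "d = 0") auto
      moreover have "d \<le> n" using dvd_imp_le[OF dg g0] gn by simp
      ultimately show "d \<in> Suc ` {d \<in> {..<n}. Suc d dvd g}" using dg
        by (intro image_eqI[of _ _ "d - 1"]) auto
    qed
  qed auto
  have "real g powr s = (\<Sum>d\<in>{d. d dvd g}. J_fun s d)" using J_divisor_sum[OF g0] by simp
  also have "\<dots> = (\<Sum>d\<in>{d \<in> {..<n}. Suc d dvd g}. J_fun s (Suc d))"
    unfolding img by (subst sum.reindex) auto
  also have "\<dots> = (\<Sum>d<n. if Suc d dvd g then J_fun s (Suc d) else 0)"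
    by (rule sum.inter_filter) simp
  also have "\<dots> = (\<Sum>d<n. ee i d * ee j d * J_fun s (Suc d))"
    by (rule sum.cong) (auto simp: g_def ee_def)
  finally show ?thesis unfolding g_def .
qed

lemma A_entry:
  assumes i: "i < n" and j: "j < n"
  shows "A_mat \<alpha> \<beta> n $$ (i, j) = real (Suc i) powr \<beta> * real (Suc j) powr \<beta>
     * (\<Sum>d<n. ee i d * ee j d * J_fun (\<alpha> - \<beta>) (Suc d))"
proof -
  define a where "a = Suc i"
  define b where "b = Suc j"
  define g where "g = gcd a b"
  define L where "L = lcm a b"
  have g0: "g > 0" unfolding g_def a_def by simp
  have gl: "real g * real L = real a * real b"
  proof -
    have "a * b = g * L" unfolding g_def L_def by (rule prod_gcd_lcm_nat)
    then have "real (g * L) = real (a * b)" by simp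
    then show ?thesis by (simp only: of_nat_mult)
  qed
  have L: "real L = real a * real b / real g" using gl g0 by (simp add: eq_divide_eq mult.commute)
  have "real g powr \<alpha> * real L powr \<beta> = real g powr (\<alpha> - \<beta>) * (real a powr \<beta> * real b powr \<beta>)"
  proof -
    have "real L powr \<beta> = real a powr \<beta> * real b powr \<beta> / real g powr \<beta>"
      unfolding L by (simp add: powr_divide powr_mult)
    moreover have "real g powr \<alpha> / real g powr \<beta> = real g powr (\<alpha> - \<beta>)"
      by (simp add: powr_diff)
    ultimately show ?thesis by (metis times_divide_eq_left times_divide_eq_right)
  qed
  moreover have "A_mat \<alpha> \<beta> n $$ (i, j) = real g powr \<alpha> * real L powr \<beta>"
    unfolding A_mat_def g_def L_def a_def b_def using i j by simp
  ultimately show ?thesis using gcd_powr_sum[OF i j, of "\<alpha> - \<beta>"]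
    unfolding g_def a_def b_def by simp
qed



theorem corollary3p3:
  fixes n :: nat and \<alpha> \<beta> :: real and l :: complex
  assumes "n \<ge> 1"
    and "eigenvalue (map_mat complex_of_real (A_mat \<alpha> \<beta> n)) l"
  shows "cmod l \<le> T_n n * max 1 (real n powr (2 * \<beta>))
           * Max ((\<lambda>i. \<bar>J_fun (\<alpha> - \<beta>) i\<bar>) ` {1..n})"
proof -
  note n = assms(1)
  define A where "A = A_mat \<alpha> \<beta> n"
  define A' where "A' = map_mat complex_of_real A"
  have Ad: "dim_row A = n" "dim_col A = n" unfolding A_def A_mat_def by simp_all
  obtain v where v: "v \<in> carrier_vec n" "v \<noteq> 0\<^sub>v n" "A' *\<^sub>v v = l \<cdot>\<^sub>v v"
    using assms(2) Ad unfolding eigenvalue_def eigenvector_def A'_def[symmetric] A_def[symmetric]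
    unfolding A'_def by auto
  have dv: "dim_vec v = n" using v(1) by simp
  define c where "c = (\<lambda>i. real (Suc i) powr \<beta>)"
  define J where "J = (\<lambda>d. J_fun (\<alpha> - \<beta>) (Suc d))"
  define Jm where "Jm = Max ((\<lambda>i. \<bar>J_fun (\<alpha> - \<beta>) i\<bar>) ` {1..n})"
  define Cm where "Cm = max 1 (real n powr (2 * \<beta>))"
  define u where "u = (\<lambda>j. of_real (c j) * v $ j)"
  define w where "w = (\<lambda>d. \<Sum>j<n. of_real (ee j d) * u j)"
  define V where "V = (\<Sum>i<n. (cmod (v $ i))^2)"
  define W where "W = (\<Sum>d<n. (cmod (w d))^2)"
  define U where "U = (\<Sum>j<n. (cmod (u j))^2)"
  have ev: "(\<Sum>j<n. of_real (A $$ (i, j)) * v $ j) = l * v $ i" if i: "i < n" for i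
  proof -
    have "(A' *\<^sub>v v) $ i = (l \<cdot>\<^sub>v v) $ i" using v(3) by simp
    then show ?thesis using i Ad dv unfolding A'_def
      by (simp add: scalar_prod_def lessThan_atLeast0)
  qed
  have Vpos: "V > 0"
  proof -
    obtain i where i: "i < n" "v $ i \<noteq> 0"
      using v(1) v(2) by (metis dv eq_vecI index_zero_vec(1) index_zero_vec(2))
    have le: "(cmod (v $ i))^2 \<le> V" unfolding V_def using i by (intro member_le_sum) auto
    have "(cmod (v $ i))^2 > 0" using i by simp
    then show ?thesis using le by (rule less_le_trans)
  qed
  define S where "S = (\<Sum>i<n. cnj (v $ i) * (\<Sum>j<n. of_real (A $$ (i, j)) * v $ j))"
  have S1: "S = l * of_real V"
  proof -
    have "S = (\<Sum>i<n. l * (v $ i * cnj (v $ i)))" unfolding S_def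
    proof (rule sum.cong[OF refl])
      fix i assume i: "i \<in> {..<n}"
      have e: "(\<Sum>j<n. of_real (A $$ (i, j)) * v $ j) = l * v $ i" using ev i by simp
      show "cnj (v $ i) * (\<Sum>j<n. of_real (A $$ (i, j)) * v $ j) = l * (v $ i * cnj (v $ i))"
        unfolding e by (simp add: mult_ac)
    qed
    also have "\<dots> = l * of_real V" unfolding V_def
      by (simp only: sum_distrib_left[symmetric] of_real_sum complex_norm_square)
    finally show ?thesis .
  qed
  have S2: "S = (\<Sum>d<n. of_real (J d) * (cnj (w d) * w d))"
  proof -
    define F where "F = (\<lambda>i j d. (of_real (ee i d) * cnj (u i)) * (of_real (J d) * (of_real (ee j d) * u j)))"
    have "S = (\<Sum>i<n. \<Sum>j<n. \<Sum>d<n. F i j d)" unfolding S_def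
    proof (rule sum.cong[OF refl])
      fix i assume i: "i \<in> {..<n}"
      show "cnj (v $ i) * (\<Sum>j<n. of_real (A $$ (i, j)) * v $ j) = (\<Sum>j<n. \<Sum>d<n. F i j d)"
        unfolding sum_distrib_left
      proof (rule sum.cong[OF refl])
        fix j assume j: "j \<in> {..<n}"
        have "A $$ (i, j) = c i * c j * (\<Sum>d<n. ee i d * ee j d * J d)"
          unfolding A_def c_def J_def using A_entry i j by simp
        then show "cnj (v $ i) * (of_real (A $$ (i, j)) * v $ j) = (\<Sum>d<n. F i j d)"
          unfolding F_def u_def by (simp add: sum_distrib_left sum_distrib_right mult_ac)
      qed
    qed
    also have "\<dots> = (\<Sum>i<n. \<Sum>d<n. \<Sum>j<n. F i j d)" by (rule sum.cong[OF refl]) (rule sum.swap)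
    also have "\<dots> = (\<Sum>d<n. \<Sum>i<n. \<Sum>j<n. F i j d)" by (rule sum.swap)
    also have "\<dots> = (\<Sum>d<n. of_real (J d) * (cnj (w d) * w d))"
    proof (rule sum.cong[OF refl])
      fix d
      have cw: "cnj (w d) = (\<Sum>i<n. of_real (ee i d) * cnj (u i))" unfolding w_def by simp
      show "(\<Sum>i<n. \<Sum>j<n. F i j d) = of_real (J d) * (cnj (w d) * w d)"
        unfolding cw unfolding w_def F_def
        by (simp add: sum_distrib_left sum_distrib_right mult_ac)
    qed
    finally show ?thesis .
  qed
  have Jb: "\<bar>J d\<bar> \<le> Jm" if "d < n" for d
    unfolding J_def Jm_def using that by (intro Max_ge) auto
  have Jm0: "Jm \<ge> 0" using Jb[of 0] n by simp
  have "cmod l * V = cmod S" using S1 Vpos by (simp add: norm_mult)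
  also have "\<dots> \<le> (\<Sum>d<n. cmod (of_real (J d) * (cnj (w d) * w d)))" unfolding S2 by (rule norm_sum)
  also have "\<dots> = (\<Sum>d<n. \<bar>J d\<bar> * (cmod (w d))^2)"
    by (simp add: norm_mult power2_eq_square)
  also have "\<dots> \<le> (\<Sum>d<n. Jm * (cmod (w d))^2)"
    by (intro sum_mono mult_right_mono Jb) auto
  also have "\<dots> = Jm * W" unfolding W_def by (simp add: sum_distrib_left)
  also have "\<dots> \<le> Jm * (T_n n * U)"
    using complex_rayleigh[OF n, of u] Jm0 unfolding W_def U_def w_def by (intro mult_left_mono) auto
  also have "U \<le> Cm * V"
  proof -
    have cb: "(c j)^2 \<le> Cm" if "j < n" for j
    proof -
      have "(c j)^2 = real (Suc j) powr (2 * \<beta>)" unfolding c_def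
        by (simp add: powr_powr[symmetric] power2_eq_square powr_add[symmetric])
      also have "\<dots> \<le> Cm"
      proof (cases "\<beta> \<ge> 0")
        case True
        have "real (Suc j) powr (2 * \<beta>) \<le> real n powr (2 * \<beta>)"
          using that True by (intro powr_mono2) auto
        then show ?thesis unfolding Cm_def by simp
      next
        case False
        have "real (Suc j) powr (2 * \<beta>) \<le> 1 powr (2 * \<beta>)"
          using False by (intro powr_mono2') auto
        then show ?thesis unfolding Cm_def by simp
      qed
      finally show ?thesis .
    qed
    have "U = (\<Sum>j<n. (c j)^2 * (cmod (v $ j))^2)" unfolding U_def u_def
      by (simp add: norm_mult power_mult_distrib)
    also have "\<dots> \<le> (\<Sum>j<n. Cm * (cmod (v $ j))^2)"
      by (intro sum_mono mult_right_mono cb) auto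
    also have "\<dots> = Cm * V" unfolding V_def by (simp add: sum_distrib_left)
    finally show ?thesis .
  qed
  then have "Jm * (T_n n * U) \<le> Jm * (T_n n * (Cm * V))"
    using Jm0 rayleigh_T[OF n] by (intro mult_left_mono) auto
  finally have "cmod l * V \<le> (T_n n * Cm * Jm) * V" by (simp add: mult_ac)
  then have "cmod l \<le> T_n n * Cm * Jm" using Vpos by simp
  then show ?thesis unfolding Cm_def Jm_def .
qed

end
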